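(* Assume $\ell^{(k)}_t\in[0,1]$ a.s. and that experts are ordered so that $\mu_1<\mu_2\le\dots\le\mu_K$, so $\Delta=\mu_2-\mu_1>0$. Then for every $t\ge1$: (i) if for each $k$ the sequence $(\ell^{(k)}_t)_t$ is i.i.d., $$\mathbb P\Big(L^{(1)}_t>\min_{2\le k\le K}L^{(k)}_t\Big)\le e^{-t\Delta^2/2}\Big[2+\sum_{k=3}^K\exp\big(-2t(\mu_1-\mu_k)(\mu_2-\mu_k)\big)\Big];$$ (ii) if for each $k$ the sequence $(\ell^{(k)}_t)_t$ is strictly stationary and $\varphi$-mixing with coefficients $(\varphi^{(k)}_n)$, $$\mathbb P\Big(L^{(1)}_t>\min_{2\le k\le K}L^{(k)}_t\Big)\le\sqrt e\sum_{k=1}^K\exp\Big(-\frac{t(\mu_1-\mu_k+\Delta/2)^2}{2\theta^{(k)}_t}\Big),\qquad \theta^{(k)}_t:=1+4\sum_{n=1}^{t-1}\varphi^{(k)}_n.$$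
   Context: Experts $k\in[K]$ have random losses $\ell^{(k)}_t$, $t\ge1$ (no independence across experts assumed), cumulative losses $L^{(k)}_t=\sum_{s=1}^t\ell^{(k)}_s$, and time-invariant means $\mu_k=\mathbb E[\ell^{(k)}_t]$. $\varphi$-mixing coefficients of a sequence $(U_i)$: $\varphi_n=\sup_m\sup\{|\mathbb P(B|A)-\mathbb P(B)|:A\in\sigma(U_i:i\le m),\mathbb P(A)>0,B\in\sigma(U_{m+n})\}$. *)

theory Defs
  imports "HOL-Probability.Probability"
begin

text \<open>Losses: ell k s w is the loss of expert k at time s (s \<ge> 1) in outcome w.
  Cumulative loss L k t w = sum of the losses at times 1..t.\<close>
definition cum_loss :: "(nat \<Rightarrow> nat \<Rightarrow> 'a \<Rightarrow> real) \<Rightarrow> nat \<Rightarrow> nat \<Rightarrow> 'a \<Rightarrow> real" where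
  "cum_loss ell k t w = (\<Sum>s=1..t. ell k s w)"

definition gen_sigma :: "'a measure \<Rightarrow> (nat \<Rightarrow> 'a \<Rightarrow> real) \<Rightarrow> nat set \<Rightarrow> 'a set set" where
  "gen_sigma M U I = sigma_sets (space M) {U i -` B \<inter> space M | i B. i \<in> I \<and> B \<in> sets borel}"

definition phi_coeff :: "'a measure \<Rightarrow> (nat \<Rightarrow> 'a \<Rightarrow> real) \<Rightarrow> nat \<Rightarrow> real" where
  "phi_coeff M U n = Sup {\<bar>measure M (A \<inter> B) / measure M A - measure M B\<bar> | m A B.
      1 \<le> m \<and> A \<in> gen_sigma M U {1..m} \<and> measure M A > 0 \<and> B \<in> gen_sigma M U {m + n}}"

definition strictly_stationary :: "'a measure \<Rightarrow> (nat \<Rightarrow> 'a \<Rightarrow> real) \<Rightarrow> bool" where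
  "strictly_stationary M U \<longleftrightarrow> (\<forall>h::nat.
     distr M (PiM UNIV (\<lambda>_. borel)) (\<lambda>w s. U (s + 1 + h) w)
   = distr M (PiM UNIV (\<lambda>_. borel)) (\<lambda>w s. U (s + 1) w))"

definition phi_mixing :: "'a measure \<Rightarrow> (nat \<Rightarrow> 'a \<Rightarrow> real) \<Rightarrow> bool" where
  "phi_mixing M U \<longleftrightarrow> (phi_coeff M U \<longlonglongrightarrow> 0)"

definition theta :: "'a measure \<Rightarrow> (nat \<Rightarrow> 'a \<Rightarrow> real) \<Rightarrow> nat \<Rightarrow> real" where
  "theta M U t = 1 + 4 * (\<Sum>n=1..t-1. phi_coeff M U n)"

end

theory Submission
  imports Defs
begin


lemma layer_cake_w:
  fixes g :: "'a \<Rightarrow> real" and w :: "'a \<Rightarrow> ennreal"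
  assumes sf: "sigma_finite_measure M"
    and g[measurable]: "g \<in> borel_measurable M" and w[measurable]: "w \<in> borel_measurable M"
  shows "(\<integral>\<^sup>+x. ennreal (g x) * w x \<partial>M)
       = (\<integral>\<^sup>+s. indicator {0..} s * (\<integral>\<^sup>+x. indicator {x\<in>space M. s < g x} x * w x \<partial>M) \<partial>lborel)"
proof -
  interpret sf: sigma_finite_measure M by fact
  interpret P: pair_sigma_finite lborel M
    by (simp add: pair_sigma_finite.intro lborel.sigma_finite_measure_axioms sf)
  have e: "ennreal (g x) = (\<integral>\<^sup>+s. indicator {0..<g x} s \<partial>lborel)" for x
    by (cases "0 \<le> g x") (auto simp: ennreal_neg)
  have "(\<integral>\<^sup>+x. ennreal (g x) * w x \<partial>M) = (\<integral>\<^sup>+x. (\<integral>\<^sup>+s. indicator {0..<g x} s * w x \<partial>lborel) \<partial>M)"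
    by (simp add: e nn_integral_multc)
  also have "\<dots> = (\<integral>\<^sup>+s. (\<integral>\<^sup>+x. indicator {0..<g x} s * w x \<partial>M) \<partial>lborel)"
  proof (rule P.Fubini')
    have "{p \<in> space (lborel \<Otimes>\<^sub>M M). 0 \<le> fst p \<and> fst p < g (snd p)} \<in> sets (lborel \<Otimes>\<^sub>M M)"
      by measurable
    then have "(\<lambda>p. indicator {p \<in> space (lborel \<Otimes>\<^sub>M M). 0 \<le> fst p \<and> fst p < g (snd p)} p * w (snd p) :: ennreal) \<in> borel_measurable (lborel \<Otimes>\<^sub>M M)"
      by measurable
    moreover have "\<And>p. p \<in> space (lborel \<Otimes>\<^sub>M M) \<Longrightarrow> indicator {p \<in> space (lborel \<Otimes>\<^sub>M M). 0 \<le> fst p \<and> fst p < g (snd p)} p * w (snd p) = (case p of (s, x) \<Rightarrow> indicator {0..<g x} s * w x)"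
      by (auto simp: indicator_def split: prod.splits)
    ultimately show "(\<lambda>(s, x). indicator {0..<g x} s * w x) \<in> borel_measurable (lborel \<Otimes>\<^sub>M M)"
      by (rule measurable_cong[THEN iffD1, rotated])
  qed
  also have "\<dots> = (\<integral>\<^sup>+s. indicator {0..} s * (\<integral>\<^sup>+x. indicator {x\<in>space M. s < g x} x * w x \<partial>M) \<partial>lborel)"
    apply (intro nn_integral_cong)
    apply (auto simp: indicator_def intro!: nn_integral_cong)
    done
  finally show ?thesis .
qed



lemma gen_sigma_sets:
  assumes "\<And>i. i \<in> I \<Longrightarrow> U i \<in> borel_measurable M"
  shows "gen_sigma M U I \<subseteq> sets M"
  unfolding gen_sigma_def
  by (rule sigma_sets_le_sets_iff[THEN iffD2]) (auto intro: assms measurable_sets)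

lemma phi_bound:
  assumes P: "prob_space M" and m: "1 \<le> m" and A: "A \<in> gen_sigma M U {1..m}"
    and B: "B \<in> gen_sigma M U {m + n}" and pos: "measure M A > 0"
  shows "\<bar>measure M (A \<inter> B) / measure M A - measure M B\<bar> \<le> phi_coeff M U n"
  unfolding phi_coeff_def
proof (rule cSup_upper)
  show "\<bar>measure M (A \<inter> B) / measure M A - measure M B\<bar> \<in> {\<bar>measure M (A \<inter> B) / measure M A - measure M B\<bar> | m A B.
      1 \<le> m \<and> A \<in> gen_sigma M U {1..m} \<and> measure M A > 0 \<and> B \<in> gen_sigma M U {m + n}}"
    using assms by blast
  interpret prob_space M by fact
  show "bdd_above {\<bar>measure M (A \<inter> B) / measure M A - measure M B\<bar> | m A B.
      1 \<le> m \<and> A \<in> gen_sigma M U {1..m} \<and> measure M A > 0 \<and> B \<in> gen_sigma M U {m + n}}"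
  proof (rule bdd_aboveI[where M=1], clarify)
    fix m A B assume "0 < measure M A"
    then have As: "A \<in> sets M" using measure_notin_sets by fastforce
    have "measure M (A \<inter> B) \<le> measure M A"
    proof (cases "A \<inter> B \<in> sets M")
      case True then show ?thesis using As by (intro finite_measure_mono) auto
    next
      case False then show ?thesis using measure_notin_sets[OF False] by simp
    qed
    then have "measure M (A \<inter> B) / measure M A \<le> 1" "0 \<le> measure M (A \<inter> B) / measure M A"
      using \<open>0 < measure M A\<close> by auto
    moreover have "measure M B \<le> 1" "0 \<le> measure M B" by auto
    ultimately show "\<bar>measure M (A \<inter> B) / measure M A - measure M B\<bar> \<le> 1" by linarith
  qed
qed

lemma phi_nonneg:
  assumes P: "prob_space M"
  shows "0 \<le> phi_coeff M U n"
proof -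
  interpret prob_space M by fact
  have "space M \<in> gen_sigma M U {1..1}" unfolding gen_sigma_def by (rule sigma_sets_top)
  moreover have "{} \<in> gen_sigma M U {1 + n}" unfolding gen_sigma_def by (rule sigma_sets.Empty)
  ultimately have "\<bar>measure M (space M \<inter> {}) / measure M (space M) - measure M {}\<bar> \<le> phi_coeff M U n"
    by (intro phi_bound[OF P]) (auto simp: prob_space)
  then show ?thesis by simp
qed

lemma phi_ineqs:
  assumes P: "prob_space M" and m: "1 \<le> m" and A: "A \<in> gen_sigma M U {1..m}"
    and B: "B \<in> gen_sigma M U {m + n}" and As: "A \<in> sets M" and Bs: "B \<in> sets M"
  shows "measure M (A \<inter> B) \<le> measure M A * measure M B + measure M A * phi_coeff M U n"
    and "measure M A * measure M B \<le> measure M (A \<inter> B) + measure M A * phi_coeff M U n"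
proof -
  interpret prob_space M by fact
  have "measure M (A \<inter> B) \<le> measure M A * measure M B + measure M A * phi_coeff M U n \<and>
    measure M A * measure M B \<le> measure M (A \<inter> B) + measure M A * phi_coeff M U n"
  proof (cases "measure M A > 0")
    case True
    have "\<bar>measure M (A \<inter> B) / measure M A - measure M B\<bar> \<le> phi_coeff M U n"
      by (rule phi_bound[OF P m A B True])
    then have "\<bar>measure M (A \<inter> B) - measure M A * measure M B\<bar> \<le> measure M A * phi_coeff M U n"
      using True by (simp add: abs_le_iff field_simps)
    then show ?thesis by (simp add: abs_le_iff algebra_simps)
  next
    case False
    then have "measure M A = 0" using measure_nonneg[of M A] by linarith
    moreover have "measure M (A \<inter> B) \<le> measure M A" using As Bs by (intro finite_measure_mono) auto
    ultimately show ?thesis by simp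
  qed
  then show "measure M (A \<inter> B) \<le> measure M A * measure M B + measure M A * phi_coeff M U n"
    and "measure M A * measure M B \<le> measure M (A \<inter> B) + measure M A * phi_coeff M U n" by auto
qed



lemma cov_sets:
  assumes P: "prob_space M" and k1: "1 \<le> k" and kn: "k < n"
    and Xm[measurable]: "X n \<in> borel_measurable M"
    and Xb: "AE w in M. 0 \<le> X n w \<and> X n w \<le> 1"
    and Xe: "integral\<^sup>L M (X n) = \<mu>"
    and A: "A \<in> gen_sigma M X {1..k}" and As[measurable]: "A \<in> sets M"
  shows "(\<integral>\<^sup>+w. ennreal (X n w) * indicator A w \<partial>M) \<le> ennreal (measure M A * (\<mu> + phi_coeff M X (n - k)))"
    and "ennreal (measure M A * \<mu>) \<le> (\<integral>\<^sup>+w. ennreal (X n w) * indicator A w \<partial>M) + ennreal (measure M A * phi_coeff M X (n - k))"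
proof -
  interpret prob_space M by fact
  define \<phi> where "\<phi> = phi_coeff M X (n - k)"
  have \<phi>0: "0 \<le> \<phi>" unfolding \<phi>_def by (rule phi_nonneg[OF P])
  define B where "B s = {x\<in>space M. s < X n x}" for s
  have Bs[measurable]: "B s \<in> sets M" for s unfolding B_def by measurable
  have Bmono: "B s' \<subseteq> B s" if "s \<le> s'" for s s' using that by (auto simp: B_def)
  have Bmeas1[measurable]: "(\<lambda>s. measure M (B s)) \<in> borel_measurable borel"
  proof -
    have "mono (\<lambda>s. - measure M (B s))"
      by (auto simp: mono_def intro!: finite_measure_mono Bmono)
    from borel_measurable_mono[OF this] have "(\<lambda>s. - (- measure M (B s))) \<in> borel_measurable borel"
      by measurable
    then show ?thesis by simp
  qed
  have Bmeas2[measurable]: "(\<lambda>s. measure M (A \<inter> B s)) \<in> borel_measurable borel"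
  proof -
    have "mono (\<lambda>s. - measure M (A \<inter> B s))"
      using Bmono by (auto simp: mono_def intro!: finite_measure_mono)
    from borel_measurable_mono[OF this] have "(\<lambda>s. - (- measure M (A \<inter> B s))) \<in> borel_measurable borel"
      by measurable
    then show ?thesis by simp
  qed
  have Bg: "B s \<in> gen_sigma M X {k + (n - k)}" for s
  proof -
    have "B s = X n -` {s<..} \<inter> space M" by (auto simp: B_def)
    then show ?thesis using kn unfolding gen_sigma_def by (intro sigma_sets.Basic) (auto intro!: exI[of _ "{s<..}"])
  qed
  have B1: "measure M (B s) = 0" if "1 \<le> s" for s
  proof -
    have "AE x in M. \<not> (s < X n x)" using Xb by (rule eventually_mono) (use that in auto)
    then have "emeasure M (B s) = 0" unfolding B_def by (rule emeasure_eq_0_AE)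
    then show ?thesis by (simp add: emeasure_eq_measure)
  qed
  have AB1: "measure M (A \<inter> B s) = 0" if "1 \<le> s" for s
    using finite_measure_mono[of "A \<inter> B s" "B s"] B1[OF that] measure_nonneg[of M "A \<inter> B s"] by auto
  have R1: "measure M (A \<inter> B s) \<le> measure M A * measure M (B s) + measure M A * \<phi> * indicator {0..<1} s" if "0 \<le> s" for s
  proof (cases "s < 1")
    case True then show ?thesis using phi_ineqs(1)[OF P k1 A Bg As Bs] that by (simp add: \<phi>_def)
  next
    case False then show ?thesis using AB1 B1 by simp
  qed
  have R2: "measure M A * measure M (B s) \<le> measure M (A \<inter> B s) + measure M A * \<phi> * indicator {0..<1} s" if "0 \<le> s" for s
  proof (cases "s < 1")
    case True then show ?thesis using phi_ineqs(2)[OF P k1 A Bg As Bs] that by (simp add: \<phi>_def)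
  next
    case False then show ?thesis using AB1 B1 by simp
  qed
  have Xint: "integrable M (X n)"
  proof (rule integrable_const_bound[where B=1])
    show "AE x in M. norm (X n x) \<le> 1" using Xb by (rule eventually_mono) auto
  qed simp
  have mu0: "0 \<le> \<mu>"
    unfolding Xe[symmetric] by (rule integral_nonneg_AE) (use Xb in \<open>rule eventually_mono, auto\<close>)
  have L1: "(\<integral>\<^sup>+w. ennreal (X n w) * indicator A w \<partial>M) = (\<integral>\<^sup>+s. indicator {0..} s * ennreal (measure M (A \<inter> B s)) \<partial>lborel)"
  proof -
    have "(\<integral>\<^sup>+w. ennreal (X n w) * indicator A w \<partial>M) = (\<integral>\<^sup>+s. indicator {0..} s * (\<integral>\<^sup>+x. indicator {x\<in>space M. s < X n x} x * indicator A x \<partial>M) \<partial>lborel)"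
      by (rule layer_cake_w) (auto intro: prob_space_imp_sigma_finite P)
    also have "\<dots> = (\<integral>\<^sup>+s. indicator {0..} s * ennreal (measure M (A \<inter> B s)) \<partial>lborel)"
    proof (intro nn_integral_cong)
      fix s
      have "(\<integral>\<^sup>+x. indicator {x\<in>space M. s < X n x} x * indicator A x \<partial>M) = (\<integral>\<^sup>+x. indicator (A \<inter> B s) x \<partial>M)"
        by (intro nn_integral_cong) (auto simp: B_def indicator_def)
      also have "\<dots> = ennreal (measure M (A \<inter> B s))" by (simp add: emeasure_eq_measure)
      finally show "indicator {0..} s * (\<integral>\<^sup>+x. indicator {x\<in>space M. s < X n x} x * indicator A x \<partial>M) = indicator {0..} s * ennreal (measure M (A \<inter> B s))" by simp
    qed
    finally show ?thesis .
  qed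
  have L2: "ennreal \<mu> = (\<integral>\<^sup>+s. indicator {0..} s * ennreal (measure M (B s)) \<partial>lborel)"
  proof -
    have "ennreal \<mu> = (\<integral>\<^sup>+w. ennreal (X n w) * 1 \<partial>M)"
      using Xe by (simp add: nn_integral_eq_integral[OF Xint] Xb[THEN eventually_mono] )
    also have "\<dots> = (\<integral>\<^sup>+s. indicator {0..} s * (\<integral>\<^sup>+x. indicator {x\<in>space M. s < X n x} x * 1 \<partial>M) \<partial>lborel)"
      by (rule layer_cake_w) (auto intro: prob_space_imp_sigma_finite P)
    also have "\<dots> = (\<integral>\<^sup>+s. indicator {0..} s * ennreal (measure M (B s)) \<partial>lborel)"
      by (intro nn_integral_cong) (simp add: B_def emeasure_eq_measure flip: B_def)
    finally show ?thesis .
  qed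
  have I1: "(\<integral>\<^sup>+s. indicator {0..<1::real} s \<partial>lborel) = 1" by simp
  show "(\<integral>\<^sup>+w. ennreal (X n w) * indicator A w \<partial>M) \<le> ennreal (measure M A * (\<mu> + \<phi>))"
  proof -
    have "(\<integral>\<^sup>+s. indicator {0..} s * ennreal (measure M (A \<inter> B s)) \<partial>lborel)
       \<le> (\<integral>\<^sup>+s. ennreal (measure M A) * (indicator {0..} s * ennreal (measure M (B s))) + ennreal (measure M A * \<phi>) * indicator {0..<1} s \<partial>lborel)"
    proof (intro nn_integral_mono)
      fix s :: real
      show "indicator {0..} s * ennreal (measure M (A \<inter> B s)) \<le> ennreal (measure M A) * (indicator {0..} s * ennreal (measure M (B s))) + ennreal (measure M A * \<phi>) * indicator {0..<1} s"
      proof (cases "0 \<le> s")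
        case True
        have "ennreal (measure M (A \<inter> B s)) \<le> ennreal (measure M A * measure M (B s) + measure M A * \<phi> * indicator {0..<1} s)"
          using R1[OF True] by (rule ennreal_leI)
        also have "\<dots> = ennreal (measure M A) * (indicator {0..} s * ennreal (measure M (B s))) + ennreal (measure M A * \<phi>) * indicator {0..<1} s"
          using True \<phi>0 by (auto simp: indicator_def ennreal_mult ennreal_plus)
        finally show ?thesis using True by simp
      qed simp
    qed
    also have "\<dots> = ennreal (measure M A) * ennreal \<mu> + ennreal (measure M A * \<phi>)"
      by (subst nn_integral_add) (auto simp: nn_integral_cmult L2 I1)
    also have "\<dots> = ennreal (measure M A * (\<mu> + \<phi>))"
      using \<phi>0 mu0 by (simp add: ennreal_mult ennreal_plus distrib_left del: ennreal_plus_if)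
    finally show ?thesis using L1 by simp
  qed
  show "ennreal (measure M A * \<mu>) \<le> (\<integral>\<^sup>+w. ennreal (X n w) * indicator A w \<partial>M) + ennreal (measure M A * \<phi>)"
  proof -
    have "ennreal (measure M A * \<mu>) \<le> ennreal (measure M A) * ennreal \<mu>"
      using mu0 by (simp add: ennreal_mult)
    also have "\<dots> = (\<integral>\<^sup>+s. ennreal (measure M A) * (indicator {0..} s * ennreal (measure M (B s))) \<partial>lborel)"
      by (simp add: L2 nn_integral_cmult)
    also have "\<dots> \<le> (\<integral>\<^sup>+s. indicator {0..} s * ennreal (measure M (A \<inter> B s)) + ennreal (measure M A * \<phi>) * indicator {0..<1} s \<partial>lborel)"
    proof (intro nn_integral_mono)
      fix s :: real
      show "ennreal (measure M A) * (indicator {0..} s * ennreal (measure M (B s))) \<le> indicator {0..} s * ennreal (measure M (A \<inter> B s)) + ennreal (measure M A * \<phi>) * indicator {0..<1} s"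
      proof (cases "0 \<le> s")
        case True
        have "ennreal (measure M A) * (indicator {0..} s * ennreal (measure M (B s))) = ennreal (measure M A * measure M (B s))"
          using True by (simp add: ennreal_mult)
        also have "\<dots> \<le> ennreal (measure M (A \<inter> B s) + measure M A * \<phi> * indicator {0..<1} s)"
          using R2[OF True] by (rule ennreal_leI)
        also have "\<dots> = indicator {0..} s * ennreal (measure M (A \<inter> B s)) + ennreal (measure M A * \<phi>) * indicator {0..<1} s"
          using True \<phi>0 by (auto simp: indicator_def ennreal_mult ennreal_plus)
        finally show ?thesis .
      qed simp
    qed
    also have "\<dots> = (\<integral>\<^sup>+w. ennreal (X n w) * indicator A w \<partial>M) + ennreal (measure M A * \<phi>)"
      by (subst nn_integral_add) (auto simp: nn_integral_cmult L1 I1)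
    finally show ?thesis by (simp add: \<phi>_def)
  qed
qed



definition Nsig :: "'a measure \<Rightarrow> (nat \<Rightarrow> 'a \<Rightarrow> real) \<Rightarrow> nat \<Rightarrow> 'a measure" where
  "Nsig M U k = sigma (space M) {U i -` B \<inter> space M | i B. i \<in> {1..k} \<and> B \<in> sets borel}"

lemma sets_Nsig: "sets (Nsig M U k) = gen_sigma M U {1..k}"
  unfolding Nsig_def gen_sigma_def by (rule sets_measure_of) auto

lemma space_Nsig: "space (Nsig M U k) = space M"
  unfolding Nsig_def by (rule space_measure_of) auto

lemma meas_Nsig: "i \<in> {1..k} \<Longrightarrow> U i \<in> borel_measurable (Nsig M U k)"
  by (rule measurableI) (auto simp: space_Nsig sets_Nsig gen_sigma_def intro!: sigma_sets.Basic)

lemma antimono_measure_borel: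
  assumes "finite_measure M" and "\<And>s s'. s \<le> s' \<Longrightarrow> C s' \<subseteq> C s" and "\<And>s. C s \<in> sets M"
  shows "(\<lambda>s::real. measure M (C s)) \<in> borel_measurable borel"
proof -
  interpret finite_measure M by fact
  have "mono (\<lambda>s. - measure M (C s))"
    using assms by (auto simp: mono_def intro!: finite_measure_mono)
  from borel_measurable_mono[OF this] have "(\<lambda>s. - (- measure M (C s))) \<in> borel_measurable borel"
    by measurable
  then show ?thesis by simp
qed

lemma cov_nonneg:
  assumes P: "prob_space M" and k1: "1 \<le> k" and kn: "k < n"
    and Xm[measurable]: "X n \<in> borel_measurable M"
    and Xb: "AE w in M. 0 \<le> X n w \<and> X n w \<le> 1"
    and Xe: "integral\<^sup>L M (X n) = \<mu>"
    and gs: "gen_sigma M X {1..k} \<subseteq> sets M"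
    and hN: "h \<in> borel_measurable (Nsig M X k)" and hM[measurable]: "h \<in> borel_measurable M"
    and h0: "\<And>w. 0 \<le> h w" and hb: "AE w in M. h w \<le> C"
  shows "\<bar>(\<integral>w. h w * X n w \<partial>M) - \<mu> * (\<integral>w. h w \<partial>M)\<bar> \<le> phi_coeff M X (n - k) * (\<integral>w. h w \<partial>M)"
proof -
  interpret prob_space M by fact
  define \<phi> where "\<phi> = phi_coeff M X (n - k)"
  have \<phi>0: "0 \<le> \<phi>" unfolding \<phi>_def by (rule phi_nonneg[OF P])
  have mu0: "0 \<le> \<mu>"
    unfolding Xe[symmetric] by (rule integral_nonneg_AE) (use Xb in \<open>rule eventually_mono, auto\<close>)
  define A where "A s = {w\<in>space M. s < h w}" for s
  have Ag: "A s \<in> gen_sigma M X {1..k}" for s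
  proof -
    have "{w\<in>space (Nsig M X k). s < h w} \<in> sets (Nsig M X k)" using hN by measurable
    then show ?thesis by (simp add: A_def space_Nsig sets_Nsig)
  qed
  have As[measurable]: "A s \<in> sets M" for s using Ag gs by auto
  have Ameas[measurable]: "(\<lambda>s. measure M (A s)) \<in> borel_measurable borel"
    by (rule antimono_measure_borel) (auto simp: A_def finite_measure_axioms)
  have hint: "integrable M h"
  proof (rule integrable_const_bound[where B=C])
    show "AE x in M. norm (h x) \<le> C" using hb by (rule eventually_mono) (use h0 in auto)
  qed simp
  have hXint: "integrable M (\<lambda>w. h w * X n w)"
  proof (rule integrable_const_bound[where B=C])
    show "AE x in M. norm (h x * X n x) \<le> C" using hb Xb
    proof (eventually_elim)
      case (elim x)
      have "h x * X n x \<le> h x * 1" using elim h0[of x] by (intro mult_left_mono) auto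
      moreover have "0 \<le> h x * X n x" using elim h0[of x] by auto
      ultimately show ?case using elim by auto
    qed
  qed simp
  have AXmeas[measurable]: "(\<lambda>s. \<integral>\<^sup>+x. ennreal (X n x) * indicator (A s) x \<partial>M) \<in> borel_measurable borel"
  proof -
    have "{p \<in> space (borel \<Otimes>\<^sub>M M). fst p < h (snd p)} \<in> sets (borel \<Otimes>\<^sub>M M)"
      by measurable
    then have "(\<lambda>p. ennreal (X n (snd p)) * indicator {p \<in> space (borel \<Otimes>\<^sub>M M). fst p < h (snd p)} p) \<in> borel_measurable (borel \<Otimes>\<^sub>M M)"
      by measurable
    moreover have "\<And>p. p \<in> space (borel \<Otimes>\<^sub>M M) \<Longrightarrow> ennreal (X n (snd p)) * indicator {p \<in> space (borel \<Otimes>\<^sub>M M). fst p < h (snd p)} p = (case p of (s, x) \<Rightarrow> ennreal (X n x) * indicator (A s) x)"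
      by (auto simp: indicator_def A_def space_pair_measure split: prod.splits)
    ultimately have "(\<lambda>(s, x). ennreal (X n x) * indicator (A s) x) \<in> borel_measurable (borel \<Otimes>\<^sub>M M)"
      by (rule measurable_cong[THEN iffD1, rotated])
    then show ?thesis by (rule borel_measurable_nn_integral)
  qed
  have LH: "ennreal (\<integral>w. h w \<partial>M) = (\<integral>\<^sup>+s. indicator {0..} s * ennreal (measure M (A s)) \<partial>lborel)"
  proof -
    have "ennreal (\<integral>w. h w \<partial>M) = (\<integral>\<^sup>+w. ennreal (h w) * 1 \<partial>M)"
      by (simp add: nn_integral_eq_integral[OF hint] h0)
    also have "\<dots> = (\<integral>\<^sup>+s. indicator {0..} s * (\<integral>\<^sup>+x. indicator {x\<in>space M. s < h x} x * 1 \<partial>M) \<partial>lborel)"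
      by (rule layer_cake_w) (auto intro: prob_space_imp_sigma_finite P)
    also have "\<dots> = (\<integral>\<^sup>+s. indicator {0..} s * ennreal (measure M (A s)) \<partial>lborel)"
      by (intro nn_integral_cong) (simp add: A_def emeasure_eq_measure flip: A_def)
    finally show ?thesis .
  qed
  have LHX: "ennreal (\<integral>w. h w * X n w \<partial>M) = (\<integral>\<^sup>+s. indicator {0..} s * (\<integral>\<^sup>+x. ennreal (X n x) * indicator (A s) x \<partial>M) \<partial>lborel)"
  proof -
    have "ennreal (\<integral>w. h w * X n w \<partial>M) = (\<integral>\<^sup>+w. ennreal (h w * X n w) \<partial>M)"
      by (rule nn_integral_eq_integral[OF hXint, symmetric]) (use Xb in \<open>rule eventually_mono, use h0 in auto\<close>)
    also have "\<dots> = (\<integral>\<^sup>+w. ennreal (h w) * ennreal (X n w) \<partial>M)"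
      by (rule nn_integral_cong_AE) (use Xb in \<open>rule eventually_mono, use h0 in \<open>auto simp: ennreal_mult\<close>\<close>)
    also have "\<dots> = (\<integral>\<^sup>+s. indicator {0..} s * (\<integral>\<^sup>+x. indicator {x\<in>space M. s < h x} x * ennreal (X n x) \<partial>M) \<partial>lborel)"
      by (rule layer_cake_w) (auto intro: prob_space_imp_sigma_finite P)
    also have "\<dots> = (\<integral>\<^sup>+s. indicator {0..} s * (\<integral>\<^sup>+x. ennreal (X n x) * indicator (A s) x \<partial>M) \<partial>lborel)"
      by (intro nn_integral_cong) (simp add: A_def mult.commute)
    finally show ?thesis .
  qed
  have up: "ennreal (\<integral>w. h w * X n w \<partial>M) \<le> ennreal ((\<mu> + \<phi>) * (\<integral>w. h w \<partial>M))"
  proof -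
    have "ennreal (\<integral>w. h w * X n w \<partial>M) \<le> (\<integral>\<^sup>+s. ennreal (\<mu> + \<phi>) * (indicator {0..} s * ennreal (measure M (A s))) \<partial>lborel)"
      unfolding LHX
    proof (intro nn_integral_mono)
      fix s :: real
      have "(\<integral>\<^sup>+x. ennreal (X n x) * indicator (A s) x \<partial>M) \<le> ennreal (measure M (A s) * (\<mu> + \<phi>))"
        unfolding \<phi>_def by (rule cov_sets(1)[OF P k1 kn Xm Xb Xe Ag As])
      also have "\<dots> = ennreal (\<mu> + \<phi>) * ennreal (measure M (A s))"
        using mu0 \<phi>0 by (simp add: ennreal_mult mult.commute)
      finally show "indicator {0..} s * (\<integral>\<^sup>+x. ennreal (X n x) * indicator (A s) x \<partial>M) \<le> ennreal (\<mu> + \<phi>) * (indicator {0..} s * ennreal (measure M (A s)))"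
        by (cases "0 \<le> s") auto
    qed
    also have "\<dots> = ennreal (\<mu> + \<phi>) * ennreal (\<integral>w. h w \<partial>M)"
      by (simp add: nn_integral_cmult LH)
    also have "\<dots> = ennreal ((\<mu> + \<phi>) * (\<integral>w. h w \<partial>M))"
      using mu0 \<phi>0 by (simp add: ennreal_mult integral_nonneg_AE h0)
    finally show ?thesis .
  qed
  have i0: "0 \<le> (\<integral>w. h w \<partial>M)" by (simp add: integral_nonneg_AE h0)
  have lo: "ennreal (\<mu> * (\<integral>w. h w \<partial>M)) \<le> ennreal ((\<integral>w. h w * X n w \<partial>M) + \<phi> * (\<integral>w. h w \<partial>M))"
  proof -
    have "ennreal (\<mu> * (\<integral>w. h w \<partial>M)) = (\<integral>\<^sup>+s. ennreal \<mu> * (indicator {0..} s * ennreal (measure M (A s))) \<partial>lborel)"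
      using mu0 by (simp add: nn_integral_cmult LH[symmetric] ennreal_mult[OF mu0 i0])
    also have "\<dots> \<le> (\<integral>\<^sup>+s. indicator {0..} s * (\<integral>\<^sup>+x. ennreal (X n x) * indicator (A s) x \<partial>M) + ennreal \<phi> * (indicator {0..} s * ennreal (measure M (A s))) \<partial>lborel)"
    proof (intro nn_integral_mono)
      fix s :: real
      have "ennreal (measure M (A s) * \<mu>) \<le> (\<integral>\<^sup>+x. ennreal (X n x) * indicator (A s) x \<partial>M) + ennreal (measure M (A s) * \<phi>)"
        unfolding \<phi>_def by (rule cov_sets(2)[OF P k1 kn Xm Xb Xe Ag As])
      then show "ennreal \<mu> * (indicator {0..} s * ennreal (measure M (A s))) \<le> indicator {0..} s * (\<integral>\<^sup>+x. ennreal (X n x) * indicator (A s) x \<partial>M) + ennreal \<phi> * (indicator {0..} s * ennreal (measure M (A s)))"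
        using mu0 \<phi>0 by (cases "0 \<le> s") (auto simp: ennreal_mult mult.commute)
    qed
    also have "\<dots> = ennreal (\<integral>w. h w * X n w \<partial>M) + ennreal \<phi> * ennreal (\<integral>w. h w \<partial>M)"
      by (subst nn_integral_add) (auto simp: nn_integral_cmult LH LHX)
    also have "\<dots> = ennreal ((\<integral>w. h w * X n w \<partial>M) + \<phi> * (\<integral>w. h w \<partial>M))"
      using \<phi>0 by (simp add: ennreal_mult integral_nonneg_AE h0 ennreal_plus integral_nonneg_AE Xb[THEN eventually_mono] del: ennreal_plus_if)
    finally show ?thesis .
  qed
  have i1: "0 \<le> (\<integral>w. h w * X n w \<partial>M)"
    by (rule integral_nonneg_AE) (use Xb in \<open>rule eventually_mono, use h0 in auto\<close>)
  from up have "(\<integral>w. h w * X n w \<partial>M) \<le> (\<mu> + \<phi>) * (\<integral>w. h w \<partial>M)"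
    using i0 mu0 \<phi>0 by (subst (asm) ennreal_le_iff) auto
  moreover from lo have "\<mu> * (\<integral>w. h w \<partial>M) \<le> (\<integral>w. h w * X n w \<partial>M) + \<phi> * (\<integral>w. h w \<partial>M)"
    using i0 i1 \<phi>0 by (subst (asm) ennreal_le_iff) auto
  ultimately show ?thesis unfolding \<phi>_def[symmetric] by (simp add: abs_le_iff algebra_simps)
qed



lemma cov_real:
  assumes P: "prob_space M" and k1: "1 \<le> k" and kn: "k < n"
    and Xm[measurable]: "X n \<in> borel_measurable M"
    and Xb: "AE w in M. 0 \<le> X n w \<and> X n w \<le> 1"
    and Xe: "integral\<^sup>L M (X n) = \<mu>"
    and gs: "gen_sigma M X {1..k} \<subseteq> sets M"
    and hN[measurable]: "h \<in> borel_measurable (Nsig M X k)" and hM[measurable]: "h \<in> borel_measurable M"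
    and hb: "AE w in M. \<bar>h w\<bar> \<le> C"
  shows "\<bar>\<integral>w. h w * (X n w - \<mu>) \<partial>M\<bar> \<le> phi_coeff M X (n - k) * (\<integral>w. \<bar>h w\<bar> \<partial>M)"
proof -
  interpret prob_space M by fact
  define hp where "hp w = max (h w) 0" for w
  define hm where "hm w = max (- h w) 0" for w
  have [measurable]: "hp \<in> borel_measurable (Nsig M X k)" "hm \<in> borel_measurable (Nsig M X k)"
    "hp \<in> borel_measurable M" "hm \<in> borel_measurable M"
    unfolding hp_def hm_def by measurable
  have hpb: "AE w in M. hp w \<le> C"
    using hb by (rule eventually_mono) (auto simp: hp_def)
  have hmb: "AE w in M. hm w \<le> C"
    using hb by (rule eventually_mono) (auto simp: hm_def)
  have cp: "\<bar>(\<integral>w. hp w * X n w \<partial>M) - \<mu> * (\<integral>w. hp w \<partial>M)\<bar> \<le> phi_coeff M X (n - k) * (\<integral>w. hp w \<partial>M)"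
    by (rule cov_nonneg[OF P k1 kn Xm Xb Xe gs _ _ _ hpb]) (auto simp: hp_def)
  have cm: "\<bar>(\<integral>w. hm w * X n w \<partial>M) - \<mu> * (\<integral>w. hm w \<partial>M)\<bar> \<le> phi_coeff M X (n - k) * (\<integral>w. hm w \<partial>M)"
    by (rule cov_nonneg[OF P k1 kn Xm Xb Xe gs _ _ _ hmb]) (auto simp: hm_def)
  have bint: "integrable M f" if "f \<in> borel_measurable M" "AE w in M. \<bar>f w\<bar> \<le> B" for f :: "'a \<Rightarrow> real" and B
    using that by (intro integrable_const_bound[where B=B]) auto
  have ip: "integrable M hp" using hpb by (intro bint[of _ C]) (simp, rule eventually_mono, auto simp: hp_def)
  have im: "integrable M hm" using hmb by (intro bint[of _ C]) (simp, rule eventually_mono, auto simp: hm_def)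
  have ipX: "integrable M (\<lambda>w. hp w * X n w)"
  proof (rule bint[of _ C])
    show "AE w in M. \<bar>hp w * X n w\<bar> \<le> C" using hpb Xb
    proof eventually_elim
      case (elim x)
      have "hp x * X n x \<le> hp x * 1" using elim by (intro mult_left_mono) (auto simp: hp_def)
      moreover have "0 \<le> hp x * X n x" using elim by (auto simp: hp_def)
      ultimately show ?case using elim by auto
    qed
  qed simp
  have imX: "integrable M (\<lambda>w. hm w * X n w)"
  proof (rule bint[of _ C])
    show "AE w in M. \<bar>hm w * X n w\<bar> \<le> C" using hmb Xb
    proof eventually_elim
      case (elim x)
      have "hm x * X n x \<le> hm x * 1" using elim by (intro mult_left_mono) (auto simp: hm_def)
      moreover have "0 \<le> hm x * X n x" using elim by (auto simp: hm_def)
      ultimately show ?case using elim by auto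
    qed
  qed simp
  have "(\<integral>w. h w * (X n w - \<mu>) \<partial>M) = (\<integral>w. (hp w * X n w - \<mu> * hp w) - (hm w * X n w - \<mu> * hm w) \<partial>M)"
    by (intro Bochner_Integration.integral_cong) (auto simp: hp_def hm_def max_def algebra_simps)
  also have "\<dots> = ((\<integral>w. hp w * X n w \<partial>M) - \<mu> * (\<integral>w. hp w \<partial>M)) - ((\<integral>w. hm w * X n w \<partial>M) - \<mu> * (\<integral>w. hm w \<partial>M))"
    using ip im ipX imX by (simp add: Bochner_Integration.integral_diff)
  finally have e1: "(\<integral>w. h w * (X n w - \<mu>) \<partial>M) = \<dots>" .
  have "(\<integral>w. \<bar>h w\<bar> \<partial>M) = (\<integral>w. hp w + hm w \<partial>M)"
    by (intro Bochner_Integration.integral_cong) (auto simp: hp_def hm_def max_def)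
  also have "\<dots> = (\<integral>w. hp w \<partial>M) + (\<integral>w. hm w \<partial>M)"
    using ip im by simp
  finally have e2: "(\<integral>w. \<bar>h w\<bar> \<partial>M) = (\<integral>w. hp w \<partial>M) + (\<integral>w. hm w \<partial>M)" .
  show ?thesis unfolding e1 e2 using cp cm by (simp add: abs_le_iff algebra_simps)
qed



lemma poly_aux:
  fixes a l :: real
  assumes "0 < l" "0 \<le> a" "l * (1 + 4 * a) \<le> 1"
  shows "a * (1 + l)^2 \<le> 3/8 + 2 * a"
proof -
  have "0 \<le> l * (4 * a)" using assms by simp
  moreover have "l * (1 + 4 * a) = l + l * (4 * a)" by (simp add: algebra_simps)
  ultimately have l1: "l \<le> 1" using assms by linarith
  have "a * l^2 \<le> a * l" using l1 assms by (simp add: power2_eq_square mult_left_mono)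
  moreover have "3 * (a * l) \<le> 3/8 + a"
  proof -
    have u: "a * l * (1 + 4 * a) \<le> a" using assms mult_left_mono[OF assms(3) assms(2)] by (simp add: algebra_simps)
    have "0 \<le> 4*(a-1/16)^2" by simp
    then have q: "0 \<le> 3/8 - a/2 + 4 * a^2" by (simp add: power2_eq_square algebra_simps)
    have "3 * (a * l) * (1 + 4 * a) \<le> 3 * a" using u by simp
    also have "\<dots> \<le> (3/8 + a) * (1 + 4 * a)"
    proof -
      have "(3/8 + a) * (1 + 4*a) = 3*a + (3/8 - a/2 + 4*a^2)" by (simp add: field_simps power2_eq_square)
      then show ?thesis using q by linarith
    qed
    finally show ?thesis using assms by (simp add: mult_le_cancel_right pos_add_strict)
  qed
  ultimately show ?thesis by (simp add: power2_eq_square algebra_simps)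
qed

lemma step_ineq:
  fixes a l :: real
  assumes "0 < l" "0 \<le> a" "l * (1 + 4 * a) \<le> 1"
  shows "exp (l^2/8) + (exp l - 1)^2 * a \<le> exp (l^2 * (1 + 4 * a) / 2)"
proof -
  have "0 \<le> l * (4 * a)" using assms by simp
  moreover have "l * (1 + 4 * a) = l + l * (4 * a)" by (simp add: algebra_simps)
  ultimately have l1: "l \<le> 1" using assms by linarith
  have e1: "exp l - 1 \<le> l + l^2" using exp_bound[of l] assms l1 by simp
  have e0: "0 \<le> exp l - 1" using assms by simp
  have "(exp l - 1)^2 \<le> (l + l^2)^2" using e1 e0 by (simp add: power_mono)
  also have "(l + l^2)^2 = l^2 * (1 + l)^2" by (simp add: power2_eq_square algebra_simps)
  finally have "(exp l - 1)^2 * a \<le> l^2 * (1 + l)^2 * a" using assms by (simp add: mult_right_mono)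
  also have "\<dots> = l^2 * (a * (1 + l)^2)" by simp
  also have "\<dots> \<le> l^2 * (3/8 + 2 * a)" using poly_aux[OF assms] by (simp add: mult_left_mono)
  finally have h: "(exp l - 1)^2 * a \<le> l^2 * (3/8 + 2 * a)" .
  have "exp (l^2/8) + (exp l - 1)^2 * a \<le> exp (l^2/8) + l^2 * (3/8 + 2 * a)" using h by simp
  also have "\<dots> \<le> exp (l^2/8) * (1 + l^2 * (3/8 + 2 * a))"
  proof -
    have x0: "0 \<le> l^2 * (3/8 + 2 * a)" using assms by simp
    have "1 * (l^2 * (3/8 + 2 * a)) \<le> exp (l^2/8) * (l^2 * (3/8 + 2 * a))"
      by (rule mult_right_mono[OF _ x0]) simp
    then show ?thesis unfolding distrib_left mult_1_right mult_1_left by linarith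
  qed
  also have "\<dots> \<le> exp (l^2/8) * exp (l^2 * (3/8 + 2 * a))"
    by (intro mult_left_mono) (auto simp: exp_ge_add_one_self add.commute)
  also have "\<dots> = exp (l^2 * (1 + 4 * a) / 2)" by (simp flip: exp_add add: algebra_simps)
  finally show ?thesis .
qed

lemma chord:
  fixes l al y :: real
  assumes l: "0 \<le> l" and al: "-1 \<le> al" "al \<le> 0" and y: "al \<le> y" "y \<le> al + 1"
  shows "exp (l * y) \<le> (exp (l * al) - al * (exp (l * (al + 1)) - exp (l * al))) + (exp (l * (al + 1)) - exp (l * al)) * y"
proof -
  have c: "convex_on UNIV (\<lambda>x. exp (l * x))" by (rule convex_on_exp[OF l])
  have "exp (l * ((1 - (y - al)) * al + (y - al) * (al + 1))) \<le> (1 - (y - al)) * exp (l * al) + (y - al) * exp (l * (al + 1))"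
    using convex_onD[OF c, of "y - al" al "al + 1"] y by simp
  moreover have "(1 - (y - al)) * al + (y - al) * (al + 1) = y" by (simp add: algebra_simps)
  ultimately show ?thesis by (simp add: algebra_simps)
qed

lemma chord_A:
  fixes l al :: real
  assumes l: "0 \<le> l" and al: "-1 \<le> al" "al \<le> 0"
  shows "exp (l * al) - al * (exp (l * (al + 1)) - exp (l * al)) \<le> exp (l^2/8)"
    and "0 \<le> exp (l * al) - al * (exp (l * (al + 1)) - exp (l * al))"
proof -
  define p where "p = - al"
  have p: "0 \<le> p" "p \<le> 1" using al by (auto simp: p_def)
  have pos: "0 < 1 + p * (exp l - 1)" using p l by (simp add: add_pos_nonneg)
  have eq: "exp (l * al) - al * (exp (l * (al + 1)) - exp (l * al)) = exp (-l * p) * (1 + p * (exp l - 1))"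
    by (simp add: p_def algebra_simps exp_add)
  also have "\<dots> = exp (-l * p + ln (1 + p * (exp l - 1)))"
    unfolding exp_add using pos by (simp only: exp_ln)
  also have "\<dots> \<le> exp (l^2/8)" using Hoeffdings_lemma_aux[OF l p(1)] by simp
  finally show "exp (l * al) - al * (exp (l * (al + 1)) - exp (l * al)) \<le> exp (l^2/8)" .
  show "0 \<le> exp (l * al) - al * (exp (l * (al + 1)) - exp (l * al))" unfolding eq using pos by simp
qed

lemma chord_B:
  fixes l al :: real
  assumes l: "0 \<le> l" and al: "-1 \<le> al" "al \<le> 0"
  shows "0 \<le> exp (l * (al + 1)) - exp (l * al)" and "exp (l * (al + 1)) - exp (l * al) \<le> exp l - 1"
proof -
  have e: "exp (l * (al + 1)) - exp (l * al) = exp (l * al) * (exp l - 1)" by (simp add: algebra_simps exp_add)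
  have "exp (l * al) \<le> 1" using l al by (simp add: mult_nonneg_nonpos)
  moreover have "0 \<le> exp l - 1" using l by simp
  ultimately show "exp (l * (al + 1)) - exp (l * al) \<le> exp l - 1" unfolding e by (simp add: mult_left_le_one_le)
  show "0 \<le> exp (l * (al + 1)) - exp (l * al)" unfolding e using l by simp
qed

lemma exp_diff_one:
  fixes l y :: real
  assumes "0 \<le> l" "\<bar>y\<bar> \<le> 1"
  shows "\<bar>exp (l * y) - 1\<bar> \<le> exp l - 1"
proof (cases "0 \<le> y")
  case True
  then have "l * y \<le> l" using assms by (simp add: mult_left_le)
  moreover have "1 \<le> exp (l * y)" using True assms by simp
  ultimately show ?thesis by (simp add: abs_le_iff)
next
  case False
  then have "l * (-1) \<le> l * y" using assms by (intro mult_left_mono) auto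
  then have "-l \<le> l * y" by simp
  then have e1: "exp (-l) \<le> exp (l * y)" by (simp only: exp_le_cancel_iff)
  have "l * y \<le> 0" using False assms by (simp add: mult_nonneg_nonpos)
  then have e2: "exp (l * y) \<le> 1" by simp
  have e3: "2 \<le> exp l + exp (-l)" 
    using exp_ge_add_one_self[of l] exp_ge_add_one_self[of "-l"] by linarith
  have "\<bar>exp (l * y) - 1\<bar> = 1 - exp (l * y)" using e2 by simp
  then show ?thesis using e1 e3 by linarith
qed



lemma sum_rev_phi: fixes m :: nat shows "(\<Sum>k<m. f (m - k)) = (\<Sum>j=1..m. (f j :: real))"
proof (induction m)
  case 0 then show ?case by simp
next
  case (Suc m)
  have "(\<Sum>k<Suc m. f (Suc m - k)) = f (Suc m) + (\<Sum>k<m. f (Suc m - Suc k))"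
    by (subst sum.lessThan_Suc_shift) simp
  also have "(\<Sum>k<m. f (Suc m - Suc k)) = (\<Sum>k<m. f (m - k))" by simp
  finally show ?case using Suc by simp
qed

lemma mgf_bound:
  fixes X :: "nat \<Rightarrow> 'a \<Rightarrow> real" and \<sigma> \<mu> l :: real and t :: nat
  assumes P: "prob_space M"
    and Xm: "\<And>s. 1 \<le> s \<Longrightarrow> X s \<in> borel_measurable M"
    and Xb: "\<And>s. 1 \<le> s \<Longrightarrow> AE w in M. 0 \<le> X s w \<and> X s w \<le> 1"
    and Xe: "\<And>s. 1 \<le> s \<Longrightarrow> integral\<^sup>L M (X s) = \<mu>"
    and sg: "\<sigma> = 1 \<or> \<sigma> = -1"
    and l: "0 < l" and lt: "l * theta M X t \<le> 1"
  shows "n \<le> t \<Longrightarrow> (\<integral>w. exp (l * (\<Sum>i=1..n. \<sigma> * (X i w - \<mu>))) \<partial>M) \<le> exp (l^2 * theta M X t / 2) ^ n"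
proof -
  interpret prob_space M by fact
  define \<phi> where "\<phi> j = phi_coeff M X j" for j
  define a where "a = (\<Sum>j=1..t-1. \<phi> j)"
  have \<phi>0: "0 \<le> \<phi> j" for j unfolding \<phi>_def by (rule phi_nonneg[OF P])
  have a0: "0 \<le> a" unfolding a_def by (intro sum_nonneg \<phi>0)
  have th: "theta M X t = 1 + 4 * a" by (simp add: theta_def a_def \<phi>_def)
  have mu0: "0 \<le> \<mu>" and mu1: "\<mu> \<le> 1"
  proof -
    have "0 \<le> integral\<^sup>L M (X 1)"
      by (rule integral_nonneg_AE) (use Xb[of 1] in \<open>rule eventually_mono, auto\<close>)
    then show "0 \<le> \<mu>" using Xe[of 1] by simp
    have "integral\<^sup>L M (X 1) \<le> integral\<^sup>L M (\<lambda>_. 1::real)"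
    proof (rule integral_mono_AE)
      show "integrable M (X 1)"
        by (rule integrable_const_bound[where B=1]) (use Xb[of 1] Xm[of 1] in \<open>auto elim: eventually_mono\<close>)
      show "AE w in M. X 1 w \<le> 1" using Xb[of 1] by (rule eventually_mono) auto
    qed simp
    then show "\<mu> \<le> 1" using Xe[of 1] by (simp add: prob_space)
  qed
  define al where "al = (if \<sigma> = 1 then -\<mu> else \<mu> - 1)"
  have al: "-1 \<le> al" "al \<le> 0" using mu0 mu1 sg by (auto simp: al_def)
  define Y where "Y i w = \<sigma> * (X i w - \<mu>)" for i w
  have Yb: "AE w in M. al \<le> Y i w \<and> Y i w \<le> al + 1 \<and> \<bar>Y i w\<bar> \<le> 1" if "1 \<le> i" for i
    using Xb[OF that] by (rule eventually_mono) (use sg mu0 mu1 in \<open>auto simp: Y_def al_def\<close>)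
  have YbS: "AE w in M. al \<le> Y (Suc i) w \<and> Y (Suc i) w \<le> al + 1 \<and> \<bar>Y (Suc i) w\<bar> \<le> 1" for i
    by (rule Yb) simp
  have Ym: "Y i \<in> borel_measurable M" if "1 \<le> i" for i
    unfolding Y_def using Xm[OF that] by measurable
  have YmS[measurable]: "Y (Suc i) \<in> borel_measurable M" for i by (rule Ym) simp
  have Xint: "integrable M (X i)" if "1 \<le> i" for i
    by (rule integrable_const_bound[where B=1]) (use Xb[OF that] Xm[OF that] in \<open>auto elim: eventually_mono\<close>)
  have Yint: "integrable M (Y i)" if "1 \<le> i" for i
    unfolding Y_def using Xint[OF that] by simp
  have Ye: "integral\<^sup>L M (Y i) = 0" if "1 \<le> i" for i
    unfolding Y_def using Xint[OF that] Xe[OF that] by (simp add: prob_space)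
  define \<psi> where "\<psi> k w = exp (l * (\<Sum>i=1..k. Y i w))" for k w
  define r where "r = exp (l^2 * theta M X t / 2)"
  have r1: "1 \<le> r" unfolding r_def th using a0 by simp
  have \<psi>M[measurable]: "\<psi> k \<in> borel_measurable M" for k
  proof -
    have [measurable]: "(\<lambda>w. \<Sum>i=1..k. Y i w) \<in> borel_measurable M" by (intro borel_measurable_sum Ym) auto
    show ?thesis unfolding \<psi>_def by measurable
  qed
  have \<psi>N: "\<psi> j \<in> borel_measurable (Nsig M X k)" if "j \<le> k" for j k
  proof -
    have "(\<lambda>w. \<sigma> * (X i w - \<mu>)) \<in> borel_measurable (Nsig M X k)" if "i \<in> {1..j}" for i
    proof -
      have [measurable]: "X i \<in> borel_measurable (Nsig M X k)" using meas_Nsig[of i k X M] that \<open>j \<le> k\<close> by auto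
      show ?thesis by measurable
    qed
    then have [measurable]: "(\<lambda>w. \<Sum>i=1..j. \<sigma> * (X i w - \<mu>)) \<in> borel_measurable (Nsig M X k)"
      by (intro borel_measurable_sum) auto
    show ?thesis unfolding \<psi>_def Y_def by measurable
  qed
  have \<psi>pos: "0 < \<psi> k w" for k w unfolding \<psi>_def by simp
  have \<psi>b: "AE w in M. \<psi> k w \<le> exp (l * k)" for k
  proof -
    have "AE w in M. \<forall>i\<in>{1..k}. \<bar>Y i w\<bar> \<le> 1"
      by (rule AE_finite_allI) (use Yb in \<open>auto elim: eventually_mono\<close>)
    then show ?thesis
    proof (rule eventually_mono)
      fix w assume h: "\<forall>i\<in>{1..k}. \<bar>Y i w\<bar> \<le> 1"
      have "(\<Sum>i=1..k. Y i w) \<le> (\<Sum>i=1..k. 1)"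
      proof (intro sum_mono)
        fix i assume "i \<in> {1..k}" then have "\<bar>Y i w\<bar> \<le> 1" using h by blast
        then show "Y i w \<le> 1" by simp
      qed
      then have "(\<Sum>i=1..k. Y i w) \<le> k" by simp
      then have "l * (\<Sum>i=1..k. Y i w) \<le> l * k" using l by (simp add: mult_left_mono)
      then show "\<psi> k w \<le> exp (l * k)" unfolding \<psi>_def by simp
    qed
  qed
  have \<psi>int: "integrable M (\<psi> k)" for k
    by (rule integrable_const_bound[where B="exp (l * k)"]) (use \<psi>b[of k] \<psi>pos in \<open>auto elim!: eventually_mono simp: less_imp_le\<close>)
  have \<psi>0: "\<psi> 0 w = 1" for w unfolding \<psi>_def by simp
  have \<psi>S: "\<psi> (Suc m) w = \<psi> m w * exp (l * Y (Suc m) w)" for m w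
    unfolding \<psi>_def by (simp add: distrib_left exp_add)
  define A where "A = exp (l * al) - al * (exp (l * (al + 1)) - exp (l * al))"
  define B where "B = exp (l * (al + 1)) - exp (l * al)"
  have A8: "A \<le> exp (l^2/8)" and A0: "0 \<le> A" unfolding A_def using chord_A[OF _ al] l by auto
  have B0: "0 \<le> B" and Bl: "B \<le> exp l - 1" unfolding B_def using chord_B[OF _ al] l by auto
  show "n \<le> t \<Longrightarrow> (\<integral>w. exp (l * (\<Sum>i=1..n. \<sigma> * (X i w - \<mu>))) \<partial>M) \<le> exp (l^2 * theta M X t / 2) ^ n"
    unfolding Y_def[symmetric] \<psi>_def[symmetric] r_def[symmetric]
  proof (induction n rule: less_induct)
    case (less n)
    show ?case
    proof (cases n)
      case 0 then show ?thesis by (simp add: \<psi>0 prob_space)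
    next
      case (Suc m)
      have mt: "m < t" using less.prems Suc by simp
      have IH: "integral\<^sup>L M (\<psi> k) \<le> r ^ m" if "k \<le> m" for k
      proof -
        have "integral\<^sup>L M (\<psi> k) \<le> r ^ k" using less.IH[of k] that Suc mt by simp
        also have "\<dots> \<le> r ^ m" using r1 that by (simp add: power_increasing)
        finally show ?thesis .
      qed
      define Z where "Z = Y (Suc m)"
      have Zint: "integrable M (\<lambda>w. \<psi> m w * Z w)"
      proof (rule integrable_const_bound[where B="exp (l * m)"])
        show "AE w in M. norm (\<psi> m w * Z w) \<le> exp (l * m)" using \<psi>b[of m] YbS[of m]
        proof eventually_elim
          case (elim w)
          have "\<bar>\<psi> m w * Z w\<bar> = \<psi> m w * \<bar>Z w\<bar>" using \<psi>pos[of m w] by (simp add: abs_mult)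
          also have "\<dots> \<le> \<psi> m w * 1" using elim \<psi>pos[of m w] by (intro mult_left_mono) (auto simp: Z_def)
          finally show ?case using elim by simp
        qed
      qed (unfold Z_def, measurable)
      have step1: "integral\<^sup>L M (\<psi> n) \<le> (\<integral>w. \<psi> m w * (A + B * Z w) \<partial>M)"
      proof (rule integral_mono_AE)
        show "integrable M (\<psi> n)" by (rule \<psi>int)
        show "integrable M (\<lambda>w. \<psi> m w * (A + B * Z w))"
          using Zint \<psi>int[of m] by (simp add: distrib_left mult.left_commute)
        show "AE w in M. \<psi> n w \<le> \<psi> m w * (A + B * Z w)" using YbS[of m]
        proof (rule eventually_mono)
          fix w assume "al \<le> Y (Suc m) w \<and> Y (Suc m) w \<le> al + 1 \<and> \<bar>Y (Suc m) w\<bar> \<le> 1"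
          then have "exp (l * Z w) \<le> A + B * Z w"
            unfolding A_def B_def Z_def using chord[OF _ al, of l "Y (Suc m) w"] l by simp
          then show "\<psi> n w \<le> \<psi> m w * (A + B * Z w)"
            using \<psi>pos[of m w] by (simp add: Suc \<psi>S Z_def)
        qed
      qed
      have eq1: "(\<integral>w. \<psi> m w * (A + B * Z w) \<partial>M) = A * integral\<^sup>L M (\<psi> m) + B * (\<integral>w. \<psi> m w * Z w \<partial>M)"
      proof -
        have "(\<integral>w. \<psi> m w * (A + B * Z w) \<partial>M) = (\<integral>w. A * \<psi> m w + B * (\<psi> m w * Z w) \<partial>M)"
          by (simp add: algebra_simps)
        also have "\<dots> = A * integral\<^sup>L M (\<psi> m) + B * (\<integral>w. \<psi> m w * Z w \<partial>M)"
          using Zint \<psi>int[of m] by simp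
        finally show ?thesis .
      qed
      define D where "D k w = \<psi> (Suc k) w - \<psi> k w" for k w
      have DM[measurable]: "D k \<in> borel_measurable M" for k unfolding D_def by measurable
      have Db: "AE w in M. \<bar>D k w\<bar> \<le> exp (l * Suc k) + exp (l * k)" for k
        using \<psi>b[of "Suc k"] \<psi>b[of k]
      proof eventually_elim
        case (elim w)
        then show ?case using \<psi>pos[of k w] \<psi>pos[of "Suc k" w] by (simp add: D_def abs_le_iff)
      qed
      have Dabs: "AE w in M. \<bar>D k w\<bar> \<le> (exp l - 1) * \<psi> k w" for k
        using YbS[of k]
      proof eventually_elim
        case (elim w)
        have "\<bar>D k w\<bar> = \<psi> k w * \<bar>exp (l * Y (Suc k) w) - 1\<bar>"
        proof -
          have "D k w = \<psi> k w * (exp (l * Y (Suc k) w) - 1)" by (simp add: D_def \<psi>S right_diff_distrib)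
          then show ?thesis using \<psi>pos[of k w] by (simp add: abs_mult)
        qed
        also have "\<dots> \<le> \<psi> k w * (exp l - 1)"
          using elim l \<psi>pos[of k w] exp_diff_one[of l "Y (Suc k) w"] by (intro mult_left_mono) auto
        finally show ?case by (simp add: mult.commute)
      qed
      have Dint: "integrable M (\<lambda>w. D k w * Z w)" for k
      proof (rule integrable_const_bound[where B="exp (l * Suc k) + exp (l * k)"])
        show "AE w in M. norm (D k w * Z w) \<le> exp (l * Suc k) + exp (l * k)" using Db[of k] YbS[of m]
        proof eventually_elim
          case (elim w)
          have "\<bar>D k w * Z w\<bar> = \<bar>D k w\<bar> * \<bar>Z w\<bar>" by (simp add: abs_mult)
          also have "\<dots> \<le> \<bar>D k w\<bar> * 1" using elim by (intro mult_left_mono) (auto simp: Z_def)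
          finally show ?case using elim by simp
        qed
      qed (unfold Z_def, measurable)
      have tele: "\<psi> m w = 1 + (\<Sum>k<m. D k w)" for w
        unfolding D_def using sum_lessThan_telescope[of "\<lambda>k. \<psi> k w" m] by (simp add: \<psi>0)
      have eq2: "(\<integral>w. \<psi> m w * Z w \<partial>M) = (\<Sum>k<m. \<integral>w. D k w * Z w \<partial>M)"
      proof -
        have "(\<integral>w. \<psi> m w * Z w \<partial>M) = (\<integral>w. Z w + (\<Sum>k<m. D k w * Z w) \<partial>M)"
          by (simp add: tele distrib_right sum_distrib_right)
        also have "\<dots> = integral\<^sup>L M Z + (\<Sum>k<m. \<integral>w. D k w * Z w \<partial>M)"
          using Dint Yint[of "Suc m"] by (simp add: Z_def)
        also have "integral\<^sup>L M Z = 0" unfolding Z_def by (rule Ye) simp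
        finally show ?thesis by simp
      qed
      have cov: "\<bar>\<integral>w. D k w * Z w \<partial>M\<bar> \<le> \<phi> (m - k) * ((exp l - 1) * r ^ m)" if "k < m" for k
      proof -
        have gs: "gen_sigma M X {1..Suc k} \<subseteq> sets M" by (rule gen_sigma_sets) (auto intro: Xm)
        have DN: "D k \<in> borel_measurable (Nsig M X (Suc k))"
          unfolding D_def using \<psi>N[of "Suc k" "Suc k"] \<psi>N[of k "Suc k"] by measurable
        have c: "\<bar>\<integral>w. D k w * (X (Suc m) w - \<mu>) \<partial>M\<bar> \<le> phi_coeff M X (Suc m - Suc k) * (\<integral>w. \<bar>D k w\<bar> \<partial>M)"
          by (rule cov_real[OF P _ _ Xm Xb Xe gs DN DM Db]) (use that in auto)
        have "(\<integral>w. D k w * Z w \<partial>M) = \<sigma> * (\<integral>w. D k w * (X (Suc m) w - \<mu>) \<partial>M)"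
          by (simp add: Z_def Y_def mult.left_commute)
        then have "\<bar>\<integral>w. D k w * Z w \<partial>M\<bar> = \<bar>\<integral>w. D k w * (X (Suc m) w - \<mu>) \<partial>M\<bar>"
          using sg by (auto simp: abs_mult)
        also have "\<dots> \<le> \<phi> (m - k) * (\<integral>w. \<bar>D k w\<bar> \<partial>M)" using c by (simp add: \<phi>_def)
        also have "\<dots> \<le> \<phi> (m - k) * ((exp l - 1) * r ^ m)"
        proof (intro mult_left_mono \<phi>0)
          have "(\<integral>w. \<bar>D k w\<bar> \<partial>M) \<le> (\<integral>w. (exp l - 1) * \<psi> k w \<partial>M)"
          proof (rule integral_mono_AE[OF _ _ Dabs])
            show "integrable M (\<lambda>w. \<bar>D k w\<bar>)"
              by (rule integrable_const_bound[where B="exp (l * Suc k) + exp (l * k)"]) (use Db[of k] in auto)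
          qed (use \<psi>int[of k] in simp)
          also have "\<dots> = (exp l - 1) * integral\<^sup>L M (\<psi> k)" by simp
          also have "\<dots> \<le> (exp l - 1) * r ^ m" using IH[of k] that l by (intro mult_left_mono) auto
          finally show "(\<integral>w. \<bar>D k w\<bar> \<partial>M) \<le> (exp l - 1) * r ^ m" .
        qed
        finally show ?thesis .
      qed
      have "\<bar>\<integral>w. \<psi> m w * Z w \<partial>M\<bar> \<le> (\<Sum>k<m. \<phi> (m - k) * ((exp l - 1) * r ^ m))"
        unfolding eq2 by (rule order.trans[OF sum_abs sum_mono]) (use cov in auto)
      also have "\<dots> = (\<Sum>k<m. \<phi> (m - k)) * ((exp l - 1) * r ^ m)" by (simp add: sum_distrib_right)
      also have "(\<Sum>k<m. \<phi> (m - k)) = (\<Sum>j=1..m. \<phi> j)" by (rule sum_rev_phi)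
      also have "\<dots> \<le> a" unfolding a_def using mt by (intro sum_mono2) (auto intro: \<phi>0)
      finally have cz: "\<bar>\<integral>w. \<psi> m w * Z w \<partial>M\<bar> \<le> a * ((exp l - 1) * r ^ m)"
        using r1 l by (simp add: mult_right_mono)
      have "integral\<^sup>L M (\<psi> n) \<le> A * integral\<^sup>L M (\<psi> m) + B * (\<integral>w. \<psi> m w * Z w \<partial>M)"
        using step1 eq1 by simp
      also have "\<dots> \<le> A * r ^ m + (exp l - 1) * (a * ((exp l - 1) * r ^ m))"
      proof (intro add_mono mult_left_mono IH)
        have "B * (\<integral>w. \<psi> m w * Z w \<partial>M) \<le> B * \<bar>\<integral>w. \<psi> m w * Z w \<partial>M\<bar>" using B0 by (simp add: mult_left_mono)
        also have "\<dots> \<le> (exp l - 1) * (a * ((exp l - 1) * r ^ m))"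
          using cz B0 Bl a0 l r1 by (intro mult_mono) auto
        finally show "B * (\<integral>w. \<psi> m w * Z w \<partial>M) \<le> (exp l - 1) * (a * ((exp l - 1) * r ^ m))" .
      qed (use A0 in auto)
      also have "\<dots> = r ^ m * (A + (exp l - 1)^2 * a)" by (simp add: power2_eq_square algebra_simps)
      also have "\<dots> \<le> r ^ m * (exp (l^2/8) + (exp l - 1)^2 * a)" using A8 r1 by simp
      also have "\<dots> \<le> r ^ m * r"
        unfolding r_def th using step_ineq[OF l a0] lt r1 th by (intro mult_left_mono) auto
      finally show ?thesis by (simp add: Suc mult.commute)
    qed
  qed
qed



lemma tail_bound:
  fixes X :: "nat \<Rightarrow> 'a \<Rightarrow> real" and \<sigma> \<mu> x :: real and t :: nat
  assumes P: "prob_space M"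
    and Xm: "\<And>s. 1 \<le> s \<Longrightarrow> X s \<in> borel_measurable M"
    and Xb: "\<And>s. 1 \<le> s \<Longrightarrow> AE w in M. 0 \<le> X s w \<and> X s w \<le> 1"
    and Xe: "\<And>s. 1 \<le> s \<Longrightarrow> integral\<^sup>L M (X s) = \<mu>"
    and sg: "\<sigma> = 1 \<or> \<sigma> = -1"
    and x0: "0 < x" and xt: "x \<le> real t" and t1: "1 \<le> t"
  shows "measure M {w\<in>space M. x \<le> (\<Sum>i=1..t. \<sigma> * (X i w - \<mu>))} \<le> exp (- (x^2) / (2 * real t * theta M X t))"
proof -
  interpret prob_space M by fact
  define \<theta> where "\<theta> = theta M X t"
  have th1: "1 \<le> \<theta>" unfolding \<theta>_def theta_def
    using sum_nonneg[of "{1..t-1}" "phi_coeff M X"] phi_nonneg[OF P] by force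
  have tpos: "0 < real t" using t1 by simp
  define l where "l = x / (real t * \<theta>)"
  have l0: "0 < l" unfolding l_def using x0 tpos th1 by simp
  have lt: "l * theta M X t \<le> 1" unfolding l_def \<theta>_def[symmetric] using th1 tpos xt by (simp add: field_simps)
  define f where "f w = (\<Sum>i=1..t. \<sigma> * (X i w - \<mu>))" for w
  have fM[measurable]: "f \<in> borel_measurable M" unfolding f_def by (intro borel_measurable_sum) (use Xm in measurable)
  have fb: "AE w in M. f w \<le> real t * (1 + \<bar>\<mu>\<bar>)"
  proof -
    have "AE w in M. \<forall>i\<in>{1..t}. 0 \<le> X i w \<and> X i w \<le> 1" by (rule AE_finite_allI) (use Xb in auto)
    then show ?thesis
    proof (rule eventually_mono)
      fix w assume h: "\<forall>i\<in>{1..t}. 0 \<le> X i w \<and> X i w \<le> 1"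
      have "f w \<le> (\<Sum>i=1..t. (1 + \<bar>\<mu>\<bar>))" unfolding f_def
      proof (intro sum_mono)
        fix i assume "i \<in> {1..t}"
        then have "0 \<le> X i w" "X i w \<le> 1" using h by auto
        then show "\<sigma> * (X i w - \<mu>) \<le> 1 + \<bar>\<mu>\<bar>" using sg by auto
      qed
      then show "f w \<le> real t * (1 + \<bar>\<mu>\<bar>)" by simp
    qed
  qed
  have eint: "integrable M (\<lambda>w. exp (l * f w))"
  proof (rule integrable_const_bound[where B="exp (l * (real t * (1 + \<bar>\<mu>\<bar>)))"])
    show "AE w in M. norm (exp (l * f w)) \<le> exp (l * (real t * (1 + \<bar>\<mu>\<bar>)))"
      using fb by (rule eventually_mono) (use l0 in \<open>simp add: mult_left_mono\<close>)
  qed simp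
  have "measure M {w\<in>space M. f w \<ge> x} \<le> exp (-l * x) * (\<integral>w\<in>space M. exp (l * f w) \<partial>M)"
  proof (rule Chernoff_ineq_ge[OF l0])
    show "set_integrable M (space M) (\<lambda>w. exp (l * f w))"
      unfolding set_integrable_def by (rule Bochner_Integration.integrable_cong[OF refl, THEN iffD2, OF _ eint]) (simp add: indicator_def)
  qed simp
  also have "(\<integral>w\<in>space M. exp (l * f w) \<partial>M) = (\<integral>w. exp (l * f w) \<partial>M)" by (rule set_integral_space[OF eint])
  also have "\<dots> \<le> exp (l^2 * theta M X t / 2) ^ t"
    unfolding f_def by (rule mgf_bound[OF P Xm Xb Xe sg l0 lt]) auto
  also have "exp (l^2 * theta M X t / 2) ^ t = exp (real t * (l^2 * \<theta> / 2))"
    unfolding exp_of_nat_mult[symmetric] \<theta>_def ..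
  also have "exp (-l * x) * exp (real t * (l^2 * \<theta> / 2)) = exp (- (x^2) / (2 * real t * \<theta>))"
  proof -
    have "-l * x + real t * (l^2 * \<theta> / 2) = - (x^2) / (2 * real t * \<theta>)"
      unfolding l_def using tpos th1 by (simp add: field_simps power2_eq_square)
    then show ?thesis by (simp flip: exp_add)
  qed
  finally show ?thesis unfolding f_def \<theta>_def by simp
qed



theorem mainTheorem4:
  fixes M :: "'a measure" and ell :: "nat \<Rightarrow> nat \<Rightarrow> 'a \<Rightarrow> real"
    and K :: nat and mu :: "nat \<Rightarrow> real" and t :: nat
  assumes P: "prob_space M"
    and K2: "2 \<le> K"
    and meas: "\<And>k s. k \<in> {1..K} \<Longrightarrow> 1 \<le> s \<Longrightarrow> ell k s \<in> borel_measurable M"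
    and bnd: "\<And>k s. k \<in> {1..K} \<Longrightarrow> 1 \<le> s \<Longrightarrow> AE w in M. 0 \<le> ell k s w \<and> ell k s w \<le> 1"
    and means: "\<And>k s. k \<in> {1..K} \<Longrightarrow> 1 \<le> s \<Longrightarrow> integral\<^sup>L M (ell k s) = mu k"
    and gap: "mu 1 < mu 2"
    and order: "\<And>k. 2 \<le> k \<Longrightarrow> k < K \<Longrightarrow> mu k \<le> mu (Suc k)"
    and t1: "1 \<le> t"
  shows
   "((\<forall>k\<in>{1..K}. prob_space.indep_vars M (\<lambda>_. borel) (ell k) {1..}
          \<and> (\<forall>s\<ge>1. distr M borel (ell k s) = distr M borel (ell k 1)))
     \<longrightarrow> measure M {w \<in> space M. cum_loss ell 1 t w > Min ((\<lambda>k. cum_loss ell k t w) ` {2..K})}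
         \<le> exp (- real t * (mu 2 - mu 1)^2 / 2) *
            (2 + (\<Sum>k=3..K. exp (- 2 * real t * (mu 1 - mu k) * (mu 2 - mu k)))))
  \<and> ((\<forall>k\<in>{1..K}. strictly_stationary M (ell k) \<and> phi_mixing M (ell k))
     \<longrightarrow> measure M {w \<in> space M. cum_loss ell 1 t w > Min ((\<lambda>k. cum_loss ell k t w) ` {2..K})}
         \<le> sqrt (exp 1) * (\<Sum>k=1..K.
              exp (- real t * (mu 1 - mu k + (mu 2 - mu 1) / 2)^2 / (2 * theta M (ell k) t))))"
proof -
  interpret prob_space M by (rule P)
  define D where "D = mu 2 - mu 1"
  have D0: "0 < D" using gap by (simp add: D_def)
  define c where "c = real t * (mu 1 + D / 2)"
  have tpos: "0 < real t" using t1 by simp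
  have mu_rng: "0 \<le> mu k \<and> mu k \<le> 1" if k: "k \<in> {1..K}" for k
  proof -
    have "0 \<le> integral\<^sup>L M (ell k 1)"
      by (rule integral_nonneg_AE) (use bnd[OF k, of 1] in \<open>rule eventually_mono, auto\<close>)
    moreover have "integral\<^sup>L M (ell k 1) \<le> integral\<^sup>L M (\<lambda>_. 1::real)"
    proof (rule integral_mono_AE)
      show "integrable M (ell k 1)"
      proof (rule integrable_const_bound[where B=1])
        show "AE x in M. norm (ell k 1 x) \<le> 1" using bnd[OF k, of 1] by (rule eventually_mono) auto
      qed (use meas[OF k, of 1] in simp)
      show "AE w in M. ell k 1 w \<le> 1" using bnd[OF k, of 1] by (rule eventually_mono) auto
    qed simp
    ultimately show ?thesis using means[OF k, of 1] by (simp add: prob_space)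
  qed
  have mu_ge: "2 \<le> k \<longrightarrow> k \<le> K \<longrightarrow> mu 2 \<le> mu k" for k
  proof (induction k)
    case 0 then show ?case by simp
  next
    case (Suc k)
    show ?case
    proof (cases "Suc k = 2")
      case True then show ?thesis by (simp add: numeral_2_eq_2)
    next
      case False
      then show ?thesis using Suc order[of k] by auto
    qed
  qed
  have Lmeas: "(\<lambda>w. cum_loss ell k t w) \<in> borel_measurable M" if k: "k \<in> {1..K}" for k
  proof (unfold cum_loss_def, intro borel_measurable_sum)
    fix i :: nat assume "i \<in> {1..t}"
    then show "ell k i \<in> borel_measurable M" using meas[OF k, of i] by auto
  qed
  have Smeas: "(\<lambda>w. \<Sum>i=1..t. s * (ell k i w - m)) \<in> borel_measurable M" if k: "k \<in> {1..K}" for k s m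
  proof (intro borel_measurable_sum)
    fix i :: nat assume "i \<in> {1..t}"
    then have [measurable]: "ell k i \<in> borel_measurable M" using meas[OF k, of i] by auto
    show "(\<lambda>w. s * (ell k i w - m)) \<in> borel_measurable M" by measurable
  qed
  define U1 where "U1 = {w\<in>space M. c \<le> cum_loss ell 1 t w}"
  define U where "U k = {w\<in>space M. cum_loss ell k t w \<le> c}" for k
  have U1s: "U1 \<in> sets M"
  proof -
    have [measurable]: "(\<lambda>w. cum_loss ell 1 t w) \<in> borel_measurable M" by (rule Lmeas) (use K2 in simp)
    show ?thesis unfolding U1_def by measurable
  qed
  have Us: "U k \<in> sets M" if "k \<in> {1..K}" for k
  proof -
    have [measurable]: "(\<lambda>w. cum_loss ell k t w) \<in> borel_measurable M" by (rule Lmeas[OF that])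
    show ?thesis unfolding U_def by measurable
  qed
  have union: "measure M {w \<in> space M. cum_loss ell 1 t w > Min ((\<lambda>k. cum_loss ell k t w) ` {2..K})}
      \<le> measure M U1 + (\<Sum>k=2..K. measure M (U k))"
  proof -
    have sub: "{w \<in> space M. cum_loss ell 1 t w > Min ((\<lambda>k. cum_loss ell k t w) ` {2..K})} \<subseteq> U1 \<union> (\<Union>k\<in>{2..K}. U k)"
    proof
      fix w assume "w \<in> {w \<in> space M. cum_loss ell 1 t w > Min ((\<lambda>k. cum_loss ell k t w) ` {2..K})}"
      then have w: "w \<in> space M" and lt: "Min ((\<lambda>k. cum_loss ell k t w) ` {2..K}) < cum_loss ell 1 t w" by auto
      have fin: "finite ((\<lambda>k. cum_loss ell k t w) ` {2..K})" by simp
      have ne: "(\<lambda>k. cum_loss ell k t w) ` {2..K} \<noteq> {}" using K2 by simp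
      have "\<exists>a\<in>(\<lambda>k. cum_loss ell k t w) ` {2..K}. a < cum_loss ell 1 t w"
        using lt Min_less_iff[OF fin ne] by blast
      then obtain k where k: "k \<in> {2..K}" "cum_loss ell k t w < cum_loss ell 1 t w" by blast
      show "w \<in> U1 \<union> (\<Union>k\<in>{2..K}. U k)"
      proof (cases "c \<le> cum_loss ell 1 t w")
        case True then have "w \<in> U1" using w by (simp add: U1_def)
        then show ?thesis by blast
      next
        case False then have "cum_loss ell k t w \<le> c" using k by simp
        then have "w \<in> U k" using w by (simp add: U_def)
        then show ?thesis using k by blast
      qed
    qed
    have Us2: "U ` {2..K} \<subseteq> sets M" using Us by auto
    have UU: "(\<Union>k\<in>{2..K}. U k) \<in> sets M" using Us2 by (intro sets.finite_UN) auto
    have Bs: "U1 \<union> (\<Union>k\<in>{2..K}. U k) \<in> sets M" using U1s UU by (rule sets.Un)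
    have "measure M {w \<in> space M. cum_loss ell 1 t w > Min ((\<lambda>k. cum_loss ell k t w) ` {2..K})} \<le> measure M (U1 \<union> (\<Union>k\<in>{2..K}. U k))"
      by (rule finite_measure_mono[OF sub Bs])
    also have "\<dots> \<le> measure M U1 + measure M (\<Union>k\<in>{2..K}. U k)"
      by (rule measure_Un_le[OF U1s UU])
    also have "measure M (\<Union>k\<in>{2..K}. U k) \<le> (\<Sum>k=2..K. measure M (U k))"
      by (rule finite_measure_subadditive_finite[OF _ Us2]) simp
    finally show ?thesis by simp
  qed
  have d_pos: "D / 2 \<le> mu k - mu 1 - D / 2" if "k \<in> {2..K}" for k
  proof -
    have "mu 2 \<le> mu k" using mu_ge[of k] that by auto
    then show ?thesis unfolding D_def by (simp add: field_simps)
  qed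
  show ?thesis
  proof (intro conjI impI)
    assume H: "\<forall>k\<in>{1..K}. prob_space.indep_vars M (\<lambda>_. borel) (ell k) {1..}
          \<and> (\<forall>s\<ge>1. distr M borel (ell k s) = distr M borel (ell k 1))"
    have hoef: "measure M {w\<in>space M. (\<Sum>i\<in>{1..t}. ell k i w) \<ge> real t * mu k + e} \<le> exp (-2 * e^2 / real t)
       \<and> measure M {w\<in>space M. (\<Sum>i\<in>{1..t}. ell k i w) \<le> real t * mu k - e} \<le> exp (-2 * e^2 / real t)"
      if k: "k \<in> {1..K}" and e: "0 \<le> e" for k e
    proof -
      have Hk: "indep_vars (\<lambda>_. borel) (ell k) {1..}" using H k by blast
      interpret Hh: Hoeffding_ineq M "{1..t}" "ell k" "\<lambda>_. 0" "\<lambda>_. 1" "real t * mu k"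
      proof unfold_locales
        show "indep_vars (\<lambda>_. borel) (ell k) {1..t}" by (rule indep_vars_subset[OF Hk]) auto
        show "AE x in M. ell k i x \<in> {0..1}" if "i \<in> {1..t}" for i
        proof -
          have "1 \<le> i" using that by simp
          from bnd[OF k this] show ?thesis by (rule eventually_mono) auto
        qed
        show "real t * mu k \<equiv> \<Sum>i\<in>{1..t}. expectation (ell k i)"
          using means[OF k] by simp
      qed simp
      have s: "(\<Sum>i\<in>{1..t}. (1 - (0::real))^2) = real t" by simp
      show ?thesis using Hh.Hoeffding_ineq_ge[OF e] Hh.Hoeffding_ineq_le[OF e] tpos unfolding s by simp
    qed
    have b1: "measure M U1 \<le> exp (- real t * (mu 2 - mu 1)^2 / 2)"
    proof -
      have "U1 = {w\<in>space M. (\<Sum>i\<in>{1..t}. ell 1 i w) \<ge> real t * mu 1 + real t * D / 2}"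
        by (simp add: U1_def c_def cum_loss_def algebra_simps)
      also have "measure M \<dots> \<le> exp (-2 * (real t * D / 2)^2 / real t)"
      proof -
        have "0 \<le> real t * D / 2" using tpos D0 by simp
        from conjunct1[OF hoef[OF _ this]] K2 show ?thesis by simp
      qed
      also have "-2 * (real t * D / 2)^2 / real t = - real t * (mu 2 - mu 1)^2 / 2"
        using tpos by (simp add: D_def power2_eq_square field_simps)
      finally show ?thesis .
    qed
    have bk: "measure M (U k) \<le> exp (- real t * (mu 2 - mu 1)^2 / 2) * exp (- 2 * real t * (mu 1 - mu k) * (mu 2 - mu k))"
      if k: "k \<in> {2..K}" for k
    proof -
      define d where "d = mu k - mu 1 - D / 2"
      have d0: "0 \<le> d" using d_pos[OF k] D0 by (simp add: d_def)
      have "U k = {w\<in>space M. (\<Sum>i\<in>{1..t}. ell k i w) \<le> real t * mu k - real t * d}"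
        by (simp add: U_def c_def d_def cum_loss_def algebra_simps)
      also have "measure M \<dots> \<le> exp (-2 * (real t * d)^2 / real t)"
      proof -
        have "0 \<le> real t * d" using tpos d0 by simp
        from conjunct2[OF hoef[OF _ this]] k show ?thesis by simp
      qed
      also have "-2 * (real t * d)^2 / real t = - real t * (mu 2 - mu 1)^2 / 2 + (- 2 * real t * (mu 1 - mu k) * (mu 2 - mu k))"
        using tpos by (simp add: d_def D_def power2_eq_square field_simps)
      finally show ?thesis by (simp only: exp_add)
    qed
    have "measure M {w \<in> space M. cum_loss ell 1 t w > Min ((\<lambda>k. cum_loss ell k t w) ` {2..K})}
       \<le> exp (- real t * (mu 2 - mu 1)^2 / 2) + (\<Sum>k=2..K. exp (- real t * (mu 2 - mu 1)^2 / 2) * exp (- 2 * real t * (mu 1 - mu k) * (mu 2 - mu k)))"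
    proof -
      have "(\<Sum>k=2..K. measure M (U k)) \<le> (\<Sum>k=2..K. exp (- real t * (mu 2 - mu 1)^2 / 2) * exp (- 2 * real t * (mu 1 - mu k) * (mu 2 - mu k)))"
        by (rule sum_mono) (rule bk)
      then show ?thesis using union b1 by linarith
    qed
    also have "(\<Sum>k=2..K. exp (- real t * (mu 2 - mu 1)^2 / 2) * exp (- 2 * real t * (mu 1 - mu k) * (mu 2 - mu k)))
       = exp (- real t * (mu 2 - mu 1)^2 / 2) * (1 + (\<Sum>k=3..K. exp (- 2 * real t * (mu 1 - mu k) * (mu 2 - mu k))))"
    proof -
      have "(\<Sum>k=2..K. exp (- 2 * real t * (mu 1 - mu k) * (mu 2 - mu k))) = exp (- 2 * real t * (mu 1 - mu 2) * (mu 2 - mu 2)) + (\<Sum>k=Suc 2..K. exp (- 2 * real t * (mu 1 - mu k) * (mu 2 - mu k)))"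
        using K2 by (rule sum.atLeast_Suc_atMost)
      also have "\<dots> = 1 + (\<Sum>k=3..K. exp (- 2 * real t * (mu 1 - mu k) * (mu 2 - mu k)))" by simp
      finally have e: "(\<Sum>k=2..K. exp (- 2 * real t * (mu 1 - mu k) * (mu 2 - mu k))) = 1 + (\<Sum>k=3..K. exp (- 2 * real t * (mu 1 - mu k) * (mu 2 - mu k)))" .
      show ?thesis unfolding e[symmetric] by (rule sum_distrib_left[symmetric])
    qed
    finally show "measure M {w \<in> space M. cum_loss ell 1 t w > Min ((\<lambda>k. cum_loss ell k t w) ` {2..K})}
         \<le> exp (- real t * (mu 2 - mu 1)^2 / 2) *
            (2 + (\<Sum>k=3..K. exp (- 2 * real t * (mu 1 - mu k) * (mu 2 - mu k))))"
      by (simp add: algebra_simps)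
  next
    assume H: "\<forall>k\<in>{1..K}. strictly_stationary M (ell k) \<and> phi_mixing M (ell k)"
    define g where "g k = exp (- real t * (mu 1 - mu k + (mu 2 - mu 1) / 2)^2 / (2 * theta M (ell k) t))" for k
    have thpos: "0 < theta M (ell k) t" for k
      unfolding theta_def using sum_nonneg[of "{1..t-1}" "phi_coeff M (ell k)"] phi_nonneg[OF P] by force
    have b1: "measure M U1 \<le> g 1"
    proof -
      have k1: "1 \<in> {1..K}" using K2 by simp
      have x0: "0 < real t * D / 2" using tpos D0 by simp
      have D1: "D \<le> 1" using mu_rng[of 1] mu_rng[of 2] K2 by (auto simp: D_def)
      have xt: "real t * D / 2 \<le> real t" using D1 tpos by simp
      have "U1 \<subseteq> {w\<in>space M. real t * D / 2 \<le> (\<Sum>i=1..t. 1 * (ell 1 i w - mu 1))}"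
        by (auto simp: U1_def c_def cum_loss_def sum_subtractf algebra_simps)
      then have "measure M U1 \<le> measure M {w\<in>space M. real t * D / 2 \<le> (\<Sum>i=1..t. 1 * (ell 1 i w - mu 1))}"
        using Smeas[OF k1, of 1 "mu 1"] by (intro finite_measure_mono) (auto intro: measurable_sets_Collect)
      also have "\<dots> \<le> exp (- ((real t * D / 2)^2) / (2 * real t * theta M (ell 1) t))"
        by (rule tail_bound[OF P _ _ _ _ x0 xt t1]) (use meas[OF k1] bnd[OF k1] means[OF k1] in auto)
      also have "\<dots> = g 1"
        unfolding g_def using tpos thpos[of 1] by (simp add: D_def power2_eq_square field_simps)
      finally show ?thesis .
    qed
    have bk: "measure M (U k) \<le> g k" if k: "k \<in> {2..K}" for k
    proof -
      have k1: "k \<in> {1..K}" using k by simp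
      define d where "d = mu k - mu 1 - D / 2"
      have x0: "0 < real t * d" using d_pos[OF k] D0 tpos by (simp add: d_def)
      have "d \<le> 1" using mu_rng[OF k1] mu_rng[of 1] K2 D0 by (auto simp: d_def)
      then have xt: "real t * d \<le> real t" using tpos by simp
      have "U k \<subseteq> {w\<in>space M. real t * d \<le> (\<Sum>i=1..t. (-1) * (ell k i w - mu k))}"
        by (auto simp: U_def c_def d_def cum_loss_def sum_subtractf sum_negf algebra_simps)
      then have "measure M (U k) \<le> measure M {w\<in>space M. real t * d \<le> (\<Sum>i=1..t. (-1) * (ell k i w - mu k))}"
        using Smeas[OF k1, of "-1" "mu k"] by (intro finite_measure_mono) (auto intro: measurable_sets_Collect)
      also have "\<dots> \<le> exp (- ((real t * d)^2) / (2 * real t * theta M (ell k) t))"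
        by (rule tail_bound[OF P _ _ _ _ x0 xt t1]) (use meas[OF k1] bnd[OF k1] means[OF k1] in auto)
      also have "\<dots> = g k"
        unfolding g_def using tpos thpos[of k] by (simp add: d_def D_def power2_eq_square field_simps)
      finally show ?thesis .
    qed
    have "measure M {w \<in> space M. cum_loss ell 1 t w > Min ((\<lambda>k. cum_loss ell k t w) ` {2..K})}
       \<le> g 1 + (\<Sum>k=2..K. g k)"
    proof -
      have "(\<Sum>k=2..K. measure M (U k)) \<le> (\<Sum>k=2..K. g k)" by (rule sum_mono) (rule bk)
      then show ?thesis using union b1 by linarith
    qed
    also have "\<dots> = (\<Sum>k=1..K. g k)"
    proof -
      have e: "(\<Sum>k=1..K. g k) = g 1 + (\<Sum>k=Suc 1..K. g k)" using K2 by (intro sum.atLeast_Suc_atMost) simp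
      show ?thesis unfolding e Suc_1 ..
    qed
    also have "\<dots> \<le> sqrt (exp 1) * (\<Sum>k=1..K. g k)"
    proof -
      have "1 \<le> sqrt (exp 1)" by simp
      moreover have "0 \<le> (\<Sum>k=1..K. g k)" by (simp add: g_def sum_nonneg)
      ultimately show ?thesis by (simp add: mult_le_cancel_right1)
    qed
    finally show "measure M {w \<in> space M. cum_loss ell 1 t w > Min ((\<lambda>k. cum_loss ell k t w) ` {2..K})}
         \<le> sqrt (exp 1) * (\<Sum>k=1..K.
              exp (- real t * (mu 1 - mu k + (mu 2 - mu 1) / 2)^2 / (2 * theta M (ell k) t)))"
      unfolding g_def .
  qed
qed


end
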